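(* Let $m\ge 3$. Let $X_1,\dots,X_m\in\mathbb{C}^n$ with $X_i=(x_{i,1},\dots,x_{i,n})$, and let $\alpha_1,\dots,\alpha_m\in\mathbb{Z}_{\ge0}^n$. Put $X_i^{\alpha_j}=x_{i,1}^{\alpha_{j,1}}\cdots x_{i,n}^{\alpha_{j,n}}$. Let $$M=\max_{i,j}|X_i^{\alpha_j}|,\qquad B=\max_{i,j,k}\Big\{|X_i^{\alpha_j}-X_i^{\alpha_k}|,\ |X_j^{\alpha_i}-X_k^{\alpha_i}|\Big\},$$ with all indices ranging over $1,\dots,m$. Let $a_1,\dots,a_m\in\mathbb{C}$ and $\varepsilon=\max_{1\le i\le m}|a_i|$. Fix a column index $k\in\{1,\dots,m\}$ and let $V_m$ be the determinant of the $m\times m$ matrix obtained from $\big(X_i^{\alpha_j}\big)_{i,j=1}^m$ by replacing its $k$-th column with $(a_1,\dots,a_m)^T$. Then $|V_m|\le M^{m-2}\,m!\,B\,\varepsilon$. *)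

theory Defs
  imports Complex_Main "Jordan_Normal_Form.Determinant"
begin

text \<open>Points X_i in C^n are given as X i :: nat => complex (coordinates l < n),
  exponent vectors alpha_j as alpha j :: nat => nat (coordinates l < n).
  Indices i, j range over {0..<m} (0-based).\<close>

definition monom_val :: "nat \<Rightarrow> (nat \<Rightarrow> complex) \<Rightarrow> (nat \<Rightarrow> nat) \<Rightarrow> complex" where
  "monom_val n x e = (\<Prod>l<n. x l ^ e l)"

end

theory Submission
  imports Defs
begin

lemma fin2: "finite {f i j | i j. i < (m::nat) \<and> j < m}"
proof -
  have "{f i j | i j. i < m \<and> j < m} \<subseteq> (\<lambda>(i,j). f i j) ` ({..<m} \<times> {..<m})" by auto
  thus ?thesis by (rule finite_subset) auto
qed

lemma fin3: "finite {f i j k' | i j k'. i < (m::nat) \<and> j < m \<and> k' < m}"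
proof -
  have "{f i j k' | i j k'. i < m \<and> j < m \<and> k' < m} \<subseteq> (\<lambda>(i,j,k'). f i j k') ` ({..<m} \<times> {..<m} \<times> {..<m})" by (auto simp: image_iff) force
  thus ?thesis by (rule finite_subset) auto
qed

theorem theorem3:
  fixes m n k :: nat
    and X :: "nat \<Rightarrow> nat \<Rightarrow> complex"
    and alpha :: "nat \<Rightarrow> nat \<Rightarrow> nat"
    and a :: "nat \<Rightarrow> complex"
  assumes "m \<ge> 3" and "k < m"
  defines "M \<equiv> Max {cmod (monom_val n (X i) (alpha j)) | i j. i < m \<and> j < m}"
    and "B \<equiv> Max ({cmod (monom_val n (X i) (alpha j) - monom_val n (X i) (alpha k')) | i j k'. i < m \<and> j < m \<and> k' < m}
               \<union> {cmod (monom_val n (X j) (alpha i) - monom_val n (X k') (alpha i)) | i j k'. i < m \<and> j < m \<and> k' < m})"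
    and "\<epsilon> \<equiv> Max {cmod (a i) | i. i < m}"
  shows "cmod (det (mat m m (\<lambda>(i, j). if j = k then a i else monom_val n (X i) (alpha j))))
           \<le> M ^ (m - 2) * fact m * B * \<epsilon>"
proof -
  define v where "v = (\<lambda>i j. monom_val n (X i) (alpha j))"
  define A where "A = mat m m (\<lambda>(i, j). if j = k then a i else v i j)"
  obtain j1 j2 where j: "j1 < m" "j2 < m" "j1 \<noteq> k" "j2 \<noteq> k" "j1 \<noteq> j2"
  proof (cases "k = 0")
    case True thus ?thesis using that[of 1 2] assms by auto
  next
    case F: False
    show ?thesis
    proof (cases "k = 1")
      case True thus ?thesis using that[of 0 2] assms by auto
    next
      case False thus ?thesis using that[of 0 1] assms F by auto
    qed
  qed
  have Ac: "A \<in> carrier_mat m m" unfolding A_def by simp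
  define A' where "A' = addcol (-1) j1 j2 A"
  have detA: "det A' = det A" unfolding A'_def using j Ac by (intro det_addcol) auto
  have A'dim: "dim_row A' = m" "dim_col A' = m" unfolding A'_def A_def mat_addcol_def by auto
  have A'e: "A' $$ (i,j) = (if j = j1 then v i j1 - v i j2 else if j = k then a i else v i j)"
    if "i < m" "j < m" for i j
    using that j unfolding A'_def A_def mat_addcol_def by auto
  have finM: "finite {cmod (v i j) | i j. i < m \<and> j < m}" by (rule fin2)
  have finB: "finite ({cmod (v i j - v i k') | i j k'. i < m \<and> j < m \<and> k' < m}
               \<union> {cmod (v j i - v k' i) | i j k'. i < m \<and> j < m \<and> k' < m})"
    using fin3[of "\<lambda>i j k'. cmod (v i j - v i k')" m] fin3[of "\<lambda>i j k'. cmod (v j i - v k' i)" m] by blast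
  have fine: "finite {cmod (a i) | i. i < m}" by simp
  have Mge: "cmod (v i j) \<le> M" if "i < m" "j < m" for i j
    unfolding M_def v_def using that by (intro Max_ge fin2) auto
  have Bge: "cmod (v i j1 - v i j2) \<le> B" if "i < m" for i
    unfolding B_def v_def using that j by (intro Max_ge finite_UnI fin3) blast
  have ege: "cmod (a i) \<le> \<epsilon>" if "i < m" for i
    unfolding \<epsilon>_def using that by (intro Max_ge[OF fine]) auto
  define c where "c = (\<lambda>j. if j = j1 then B else if j = k then \<epsilon> else M)"
  have c: "cmod (A' $$ (i,j)) \<le> c j" if "i < m" "j < m" for i j
    using that A'e[OF that] Mge[OF that] Bge[OF that(1)] ege[OF that(1)] unfolding c_def by auto
  have c0: "0 \<le> c j" if "j < m" for j
    using c[OF _ that, of 0] assms(1) norm_ge_zero[of "A' $$ (0,j)"] by linarith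
  have prodc: "(\<Prod>j\<in>{0..<m}. c j) = M ^ (m - 2) * B * \<epsilon>"
  proof -
    have "(\<Prod>j\<in>{0..<m}. c j) = c j1 * (\<Prod>j\<in>{0..<m} - {j1}. c j)"
      using j by (subst prod.remove[of _ j1]) auto
    also have "(\<Prod>j\<in>{0..<m} - {j1}. c j) = c k * (\<Prod>j\<in>{0..<m} - {j1} - {k}. c j)"
      using j assms by (subst prod.remove[of _ k]) auto
    also have "(\<Prod>j\<in>{0..<m} - {j1} - {k}. c j) = (\<Prod>j\<in>{0..<m} - {j1} - {k}. M)"
      by (rule prod.cong) (auto simp: c_def)
    also have "\<dots> = M ^ card ({0..<m} - {j1} - {k})" by simp
    also have "card ({0..<m} - {j1} - {k}) = m - 2" using j assms by auto
    finally show ?thesis using j by (simp add: c_def)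
  qed
  have "cmod (det A') = cmod (\<Sum>p\<in>{p. p permutes {0..<m}}. signof p * (\<Prod>i = 0..<m. A' $$ (i, p i)))"
    unfolding det_def A'dim by simp
  also have "\<dots> \<le> (\<Sum>p\<in>{p. p permutes {0..<m}}. cmod (signof p * (\<Prod>i = 0..<m. A' $$ (i, p i))))"
    by (rule norm_sum)
  also have "\<dots> \<le> (\<Sum>p\<in>{p. p permutes {0..<m}}. M ^ (m - 2) * B * \<epsilon>)"
  proof (rule sum_mono)
    fix p assume "p \<in> {p. p permutes {0..<m}}"
    hence p: "p permutes {0..<m}" by simp
    have pi: "p i < m" if "i < m" for i using p that permutes_in_image by fastforce
    have "cmod (signof p * (\<Prod>i = 0..<m. A' $$ (i, p i))) = (\<Prod>i = 0..<m. cmod (A' $$ (i, p i)))"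
      by (simp add: norm_mult prod_norm sign_def)
    also have "\<dots> \<le> (\<Prod>i = 0..<m. c (p i))"
      by (rule prod_mono) (use c pi in auto)
    also have "\<dots> = (\<Prod>j = 0..<m. c j)"
      using prod.permute[OF p, of c] by (simp add: comp_def)
    finally show "cmod (signof p * (\<Prod>i = 0..<m. A' $$ (i, p i))) \<le> M ^ (m - 2) * B * \<epsilon>"
      using prodc by simp
  qed
  also have "\<dots> = fact m * (M ^ (m - 2) * B * \<epsilon>)"
    by (simp add: card_permutations)
  finally show ?thesis using detA unfolding A_def v_def by (simp add: mult_ac)
qed

end
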